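(* Let $1\le m\le n$, $x=(x_1,\dots,x_m)$, $y=(y_1,\dots,y_n)$, and let $k$ be an integer with $1\le k\le m$. Then \[\omega(x,y;t)=t^{m-n}(1-t)\sum_{l=1}^n\omega(x^{(k)},y^{(l)};t)\,\frac{y_l}{x_k-ty_l}\prod_{\substack{i=1\\ i\ne k}}^m\frac{x_i-y_l}{x_i-ty_l}\prod_{\substack{i=1\\ i\ne l}}^n\frac{y_i-ty_l}{y_i-y_l}.\]
   Context: For $x=(x_1,\dots,x_m)$ and $y=(y_1,\dots,y_n)$ (any $m\ge0$, with $\omega=1$ when $m=0$), \[\omega(x,y;t)=\sum_{I\subseteq\{1,\dots,m\}}(-1)^{|I|}t^{\binom{|I|}{2}}\prod_{i\in I,\ j\in\{1,\dots,m\}\setminus I}\frac{x_i-tx_j}{x_i-x_j}\prod_{i\in I}\prod_{j=1}^n\frac{x_i-y_j}{x_i-ty_j}.\] $x^{(k)}$ denotes $x$ with $x_k$ removed, and $y^{(l)}$ denotes $y$ with $y_l$ removed. *)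

theory Defs
  imports Main
begin

text \<open>Lists are 0-indexed: entry i of the list corresponds to x_(i+1) of the paper.\<close>

definition del_nth :: "nat \<Rightarrow> 'a list \<Rightarrow> 'a list" where
  "del_nth k xs = take k xs @ drop (Suc k) xs"

definition omega :: "'a::field list \<Rightarrow> 'a list \<Rightarrow> 'a \<Rightarrow> 'a" where
  "omega xs ys t =
     (\<Sum>I\<in>Pow {0..<length xs}.
        (-1) ^ card I * t ^ (card I choose 2)
        * (\<Prod>i\<in>I. \<Prod>j\<in>{0..<length xs} - I. (xs!i - t * xs!j) / (xs!i - xs!j))
        * (\<Prod>i\<in>I. \<Prod>j\<in>{0..<length ys}. (xs!i - ys!j) / (xs!i - t * ys!j)))"

end

theory Submission
  imports Defs "HOL-Computational_Algebra.Polynomial"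
begin


lemma lin_prod_degree:
  fixes a b :: "'b \<Rightarrow> 'a::field"
  assumes "finite A" "\<forall>i\<in>A. b i \<noteq> 0"
  shows "degree (\<Prod>i\<in>A. [:a i, b i:]) = card A"
proof -
  have "degree (\<Prod>i\<in>A. [:a i, b i:]) = (\<Sum>i\<in>A. degree [:a i, b i:])"
    by (rule degree_prod_eq_sum_degree) (use assms in auto)
  also have "\<dots> = (\<Sum>i\<in>A. 1)" using assms by (intro sum.cong) auto
  finally show ?thesis by simp
qed

lemma lin_prod_lead:
  fixes a b :: "'b \<Rightarrow> 'a::field"
  assumes "\<forall>i\<in>A. b i \<noteq> 0"
  shows "lead_coeff (\<Prod>i\<in>A. [:a i, b i:]) = (\<Prod>i\<in>A. b i)"
  unfolding lead_coeff_prod using assms by (intro prod.cong) auto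

lemma degree_diff_less:
  fixes p q :: "'a::field poly"
  assumes "degree p = d" "degree q = d" "lead_coeff p = lead_coeff q" "d > 0"
  shows "degree (p - q) < d"
proof -
  have le: "degree (p - q) \<le> d" by (intro degree_diff_le) (use assms in auto)
  have "coeff (p - q) d = 0" using assms by simp
  show ?thesis
  proof (rule ccontr)
    assume "\<not> degree (p - q) < d"
    then have "degree (p - q) = d" using le by simp
    with \<open>coeff (p - q) d = 0\<close> have "lead_coeff (p - q) = 0" by simp
    then have "p - q = 0" by (simp only: leading_coeff_0_iff)
    then show False using \<open>\<not> degree (p - q) < d\<close> \<open>d > 0\<close> by simp
  qed
qed

lemma poly_zero_many_roots:
  fixes p :: "'a::field poly"
  assumes "degree p < card R" "finite R" "\<forall>r\<in>R. poly p r = 0"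
  shows "p = 0"
proof (rule ccontr)
  assume "p \<noteq> 0"
  have "R \<subseteq> {x. poly p x = 0}" using assms by auto
  then have "card R \<le> card {x. poly p x = 0}"
    using poly_roots_finite[OF \<open>p \<noteq> 0\<close>] by (rule card_mono[rotated])
  also have "\<dots> \<le> degree p" by (rule card_poly_roots_bound[OF \<open>p \<noteq> 0\<close>])
  finally show False using assms by simp
qed

definition Om :: "'b set \<Rightarrow> ('b \<Rightarrow> 'a::field) \<Rightarrow> 'c set \<Rightarrow> ('c \<Rightarrow> 'a) \<Rightarrow> 'a \<Rightarrow> 'a" where
  "Om S X T Y t =
     (\<Sum>I\<in>Pow S. (-1) ^ card I * t ^ (card I choose 2)
        * (\<Prod>i\<in>I. \<Prod>j\<in>S - I. (X i - t * X j) / (X i - X j))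
        * (\<Prod>i\<in>I. \<Prod>j\<in>T. (X i - Y j) / (X i - t * Y j)))"

lemma omega_Om: "omega xs ys t = Om {0..<length xs} (nth xs) {0..<length ys} (nth ys) t"
  unfolding omega_def Om_def by simp

lemma Om_cong:
  assumes "\<forall>i\<in>S. X i = X' i" "\<forall>j\<in>T. Y j = Y' j"
  shows "Om S X T Y t = Om S X' T Y' t"
  unfolding Om_def
  by (intro sum.cong refl arg_cong2[where f="(*)"] prod.cong) (use assms in auto)

lemma Om_reindex:
  assumes "inj_on h S" "inj_on g T"
  shows "Om (h ` S) X (g ` T) Y t = Om S (X \<circ> h) T (Y \<circ> g) t"
proof -
  have inj: "inj_on ((`) h) (Pow S)"
    using assms(1) by (rule inj_on_image_Pow)
  have P: "Pow (h ` S) = (`) h ` Pow S" by (auto simp: subset_image_iff) 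
  show ?thesis
    unfolding Om_def P sum.reindex[OF inj]
  proof (intro sum.cong refl, unfold o_def)
    fix I assume I: "I \<in> Pow S"
    have injI: "inj_on h I" using assms(1) I inj_on_subset by blast
    have D: "h ` S - h ` I = h ` (S - I)" using assms(1) I by (simp add: inj_on_image_set_diff)
    have injD: "inj_on h (S - I)" using assms(1) inj_on_subset by blast
    show "(-1) ^ card (h ` I) * t ^ (card (h ` I) choose 2) *
        (\<Prod>i\<in>h ` I. \<Prod>j\<in>h ` S - h ` I. (X i - t * X j) / (X i - X j)) *
        (\<Prod>i\<in>h ` I. \<Prod>j\<in>g ` T. (X i - Y j) / (X i - t * Y j)) =
        (-1) ^ card I * t ^ (card I choose 2) *
        (\<Prod>i\<in>I. \<Prod>j\<in>S - I. (X (h i) - t * X (h j)) / (X (h i) - X (h j))) *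
        (\<Prod>i\<in>I. \<Prod>j\<in>T. (X (h i) - Y (g j)) / (X (h i) - t * Y (g j)))"
      unfolding D using injI injD assms(2)
      by (simp add: card_image prod.reindex)
  qed
qed



definition aa :: "('b \<Rightarrow> 'a::field) \<Rightarrow> 'a \<Rightarrow> 'b \<Rightarrow> 'b \<Rightarrow> 'a" where
  "aa X t i j = (X i - t * X j) / (X i - X j)"
definition ff :: "'c set \<Rightarrow> ('c \<Rightarrow> 'a::field) \<Rightarrow> 'a \<Rightarrow> 'a \<Rightarrow> 'a" where
  "ff T Y t w = (\<Prod>j\<in>T. (w - Y j) / (w - t * Y j))"
definition sg :: "'b set \<Rightarrow> ('b \<Rightarrow> 'a::field) \<Rightarrow> 'c set \<Rightarrow> ('c \<Rightarrow> 'a) \<Rightarrow> 'a \<Rightarrow> 'b set \<Rightarrow> 'a" where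
  "sg S X T Y t J = (-1) ^ card J * t ^ (card J choose 2)
     * (\<Prod>i\<in>J. \<Prod>j\<in>S - J. aa X t i j) * (\<Prod>i\<in>J. ff T Y t (X i))"

lemma Om_sg: "Om S X T Y t = (\<Sum>J\<in>Pow S. sg S X T Y t J)"
  unfolding Om_def sg_def aa_def ff_def by simp

lemma choose2_Suc: "(Suc n choose 2) = (n choose 2) + n"
  by (simp add: numeral_2_eq_2)

lemma prod_mult_div:
  fixes g h :: "'b \<Rightarrow> 'a::field"
  assumes "\<forall>i\<in>A. g i \<noteq> 0"
  shows "prod g A * prod (\<lambda>i. h i / g i) A = prod h A"
  unfolding prod.distrib[symmetric] using assms by (intro prod.cong) auto

lemma sum_Pow_insert:
  assumes fS: "finite S" and kS: "k \<notin> S"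
  shows "(\<Sum>I\<in>Pow (insert k S). g I) = (\<Sum>J\<in>Pow S. g J + g (insert k J))"
proof -
  have inj: "inj_on (insert k) (Pow S)"
  proof (rule inj_onI)
    fix A B assume "A \<in> Pow S" "B \<in> Pow S" "insert k A = insert k B"
    then show "A = B" using kS by (metis PowD insert_ident subsetD)
  qed
  have disj: "Pow S \<inter> insert k ` Pow S = {}" using kS by auto
  show ?thesis
    unfolding Pow_insert sum.distrib using fS disj inj
    by (simp add: sum.union_disjoint sum.reindex)
qed

lemma lin3_prod:
  fixes a b :: "'b \<Rightarrow> 'a::field" and c d :: "'c \<Rightarrow> 'a" and e f :: "'d \<Rightarrow> 'a"
  assumes "finite A" "finite B" "finite C"
    and "\<forall>i\<in>A. b i \<noteq> 0" "\<forall>i\<in>B. d i \<noteq> 0" "\<forall>i\<in>C. f i \<noteq> 0"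
  shows "degree ((\<Prod>i\<in>A. [:a i, b i:]) * (\<Prod>i\<in>B. [:c i, d i:]) * (\<Prod>i\<in>C. [:e i, f i:]))
           = card A + card B + card C"
    and "lead_coeff ((\<Prod>i\<in>A. [:a i, b i:]) * (\<Prod>i\<in>B. [:c i, d i:]) * (\<Prod>i\<in>C. [:e i, f i:]))
           = (\<Prod>i\<in>A. b i) * (\<Prod>i\<in>B. d i) * (\<Prod>i\<in>C. f i)"
proof -
  have lA: "lead_coeff (\<Prod>i\<in>A. [:a i, b i:]) = (\<Prod>i\<in>A. b i)" by (rule lin_prod_lead) (use assms in auto)
  have lB: "lead_coeff (\<Prod>i\<in>B. [:c i, d i:]) = (\<Prod>i\<in>B. d i)" by (rule lin_prod_lead) (use assms in auto)
  have lC: "lead_coeff (\<Prod>i\<in>C. [:e i, f i:]) = (\<Prod>i\<in>C. f i)" by (rule lin_prod_lead) (use assms in auto)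
  have nA: "(\<Prod>i\<in>A. [:a i, b i:]) \<noteq> 0" using lA assms by (auto simp: prod_zero_iff)
  have nB: "(\<Prod>i\<in>B. [:c i, d i:]) \<noteq> 0" using lB assms by (auto simp: prod_zero_iff)
  have nC: "(\<Prod>i\<in>C. [:e i, f i:]) \<noteq> 0" using lC assms by (auto simp: prod_zero_iff)
  have dA: "degree (\<Prod>i\<in>A. [:a i, b i:]) = card A" by (rule lin_prod_degree) (use assms in auto)
  have dB: "degree (\<Prod>i\<in>B. [:c i, d i:]) = card B" by (rule lin_prod_degree) (use assms in auto)
  have dC: "degree (\<Prod>i\<in>C. [:e i, f i:]) = card C" by (rule lin_prod_degree) (use assms in auto)
  show "degree ((\<Prod>i\<in>A. [:a i, b i:]) * (\<Prod>i\<in>B. [:c i, d i:]) * (\<Prod>i\<in>C. [:e i, f i:]))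
           = card A + card B + card C"
    using nA nB nC dA dB dC by (simp add: degree_mult_eq)
  show "lead_coeff ((\<Prod>i\<in>A. [:a i, b i:]) * (\<Prod>i\<in>B. [:c i, d i:]) * (\<Prod>i\<in>C. [:e i, f i:]))
           = (\<Prod>i\<in>A. b i) * (\<Prod>i\<in>B. d i) * (\<Prod>i\<in>C. f i)"
    using lA lB lC by (simp add: lead_coeff_mult)
qed

lemma Om_split:
  fixes X :: "'b \<Rightarrow> 'a::field"
  assumes fS: "finite S" and kS: "k \<notin> S"
  shows "Om (insert k S) X T Y t =
    (\<Sum>J\<in>Pow S. sg S X T Y t J * (\<Prod>i\<in>J. aa X t i k)
        - sg S X T Y t J * t ^ card J * (\<Prod>j\<in>S - J. aa X t k j) * ff T Y t (X k))"
proof -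
  let ?g = "\<lambda>I. (-1) ^ card I * t ^ (card I choose 2)
        * (\<Prod>i\<in>I. \<Prod>j\<in>insert k S - I. aa X t i j) * (\<Prod>i\<in>I. ff T Y t (X i))"
  have 0: "Om (insert k S) X T Y t = (\<Sum>I\<in>Pow (insert k S). ?g I)"
    unfolding Om_def aa_def ff_def by simp
  have inj: "inj_on (insert k) (Pow S)"
  proof (rule inj_onI)
    fix A B assume "A \<in> Pow S" "B \<in> Pow S" "insert k A = insert k B"
    then show "A = B" using kS by (metis PowD insert_ident subsetD)
  qed
  have disj: "Pow S \<inter> insert k ` Pow S = {}" using kS by auto
  have 1: "(\<Sum>I\<in>Pow (insert k S). ?g I) = (\<Sum>J\<in>Pow S. ?g J) + (\<Sum>J\<in>Pow S. ?g (insert k J))"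
    unfolding Pow_insert using fS disj inj
    by (simp add: sum.union_disjoint sum.reindex)
  have 2: "?g J + ?g (insert k J) = sg S X T Y t J * (\<Prod>i\<in>J. aa X t i k)
        - sg S X T Y t J * t ^ card J * (\<Prod>j\<in>S - J. aa X t k j) * ff T Y t (X k)"
    if J: "J \<in> Pow S" for J
  proof -
    have fJ: "finite J" using J fS finite_subset by auto
    have kJ: "k \<notin> J" using J kS by auto
    have e1: "insert k S - J = insert k (S - J)" using kJ by auto
    have e2: "insert k S - insert k J = S - J" using kS by auto
    have "(\<Prod>i\<in>J. \<Prod>j\<in>insert k S - J. aa X t i j) = (\<Prod>i\<in>J. aa X t i k * (\<Prod>j\<in>S - J. aa X t i j))"
      unfolding e1 using fS kS by (intro prod.cong refl) (simp add: prod.insert)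
    also have "\<dots> = (\<Prod>i\<in>J. aa X t i k) * (\<Prod>i\<in>J. \<Prod>j\<in>S - J. aa X t i j)"
      by (rule prod.distrib)
    finally have g1: "?g J = sg S X T Y t J * (\<Prod>i\<in>J. aa X t i k)"
      unfolding sg_def by (simp add: algebra_simps)
    have g2: "?g (insert k J) = - (sg S X T Y t J * t ^ card J * (\<Prod>j\<in>S - J. aa X t k j) * ff T Y t (X k))"
      unfolding sg_def e2 using fJ kJ by (simp add: choose2_Suc power_add algebra_simps)
    show ?thesis using g1 g2 by simp
  qed
  show ?thesis unfolding 0 1 sum.distrib[symmetric] using 2 by (intro sum.cong) auto
qed



context
  fixes S :: "'b set" and k :: 'b and X :: "'b \<Rightarrow> 'a::field" and T :: "'c set"
    and Y :: "'c \<Rightarrow> 'a" and t :: 'a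
  assumes fS: "finite S" and kS: "k \<notin> S" and fT: "finite T" and Tne: "T \<noteq> {}"
    and injX: "inj_on X (insert k S)" and injY: "inj_on Y T" and t0: "t \<noteq> 0"
    and xy: "\<forall>i\<in>insert k S. \<forall>j\<in>T. X i \<noteq> t * Y j"
begin

definition P1 :: "'b set \<Rightarrow> 'a poly" where
  "P1 J = (\<Prod>i\<in>J. [:- X i, t:]) * (\<Prod>j\<in>S - J. [:- X j, 1:]) * (\<Prod>l\<in>T. [:- (t * Y l), 1:])"
definition P2 :: "'b set \<Rightarrow> 'a poly" where
  "P2 J = (\<Prod>j\<in>S - J. [:- (t * X j), 1:]) * (\<Prod>i\<in>J. [:- X i, 1:]) * (\<Prod>l\<in>T. [:- Y l, 1:])"
definition QQ :: "'b set \<Rightarrow> 'a poly" where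
  "QQ J = P1 J - smult (t ^ card J) (P2 J)"
definition DD :: "'a poly" where
  "DD = (\<Prod>i\<in>S. [:- X i, 1:]) * (\<Prod>l\<in>T. [:- (t * Y l), 1:])"
definition PPhi :: "'a poly" where
  "PPhi = (\<Sum>J\<in>Pow S. smult (sg S X T Y t J) (QQ J))"
definition RR :: "'c \<Rightarrow> 'a" where
  "RR l = t powi (int (card S + 1) - int (card T)) * (1 - t) * Om S X (T - {l}) Y t * Y l
     * (\<Prod>i\<in>S. (X i - Y l) / (X i - t * Y l)) * (\<Prod>i\<in>T - {l}. (Y i - t * Y l) / (Y i - Y l))"
definition PR :: "'a poly" where
  "PR = (\<Sum>l\<in>T. smult (RR l) ((\<Prod>i\<in>S. [:- X i, 1:]) * (\<Prod>j\<in>T - {l}. [:- (t * Y j), 1:])))"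

lemma poly_P1: "poly (P1 J) z = (\<Prod>i\<in>J. z * t - X i) * (\<Prod>j\<in>S - J. z - X j) * (\<Prod>l\<in>T. z - t * Y l)"
  by (simp add: P1_def poly_prod)

lemma poly_P2: "poly (P2 J) z = (\<Prod>j\<in>S - J. z - t * X j) * (\<Prod>i\<in>J. z - X i) * (\<Prod>l\<in>T. z - Y l)"
  by (simp add: P2_def poly_prod)

lemma poly_DD: "poly DD z = (\<Prod>i\<in>S. z - X i) * (\<Prod>l\<in>T. z - t * Y l)"
  by (simp add: DD_def poly_prod)

lemma Xk_ne: "i \<in> S \<Longrightarrow> X k - X i \<noteq> 0"
  using injX kS by (auto simp: inj_on_def)

lemma XtY_ne: "i \<in> insert k S \<Longrightarrow> l \<in> T \<Longrightarrow> X i - t * Y l \<noteq> 0"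
  using xy by auto

lemma poly_QQ_Xk:
  assumes J: "J \<subseteq> S"
  shows "poly (QQ J) (X k) = poly DD (X k) * ((\<Prod>i\<in>J. aa X t i k)
            - t ^ card J * (\<Prod>j\<in>S - J. aa X t k j) * ff T Y t (X k))"
proof -
  let ?z = "X k"
  have fJ: "finite J" using J fS finite_subset by auto
  have split: "(\<Prod>i\<in>S. ?z - X i) = (\<Prod>i\<in>S - J. ?z - X i) * (\<Prod>i\<in>J. ?z - X i)"
    by (rule prod.subset_diff[OF J fS])
  have a1: "(\<Prod>i\<in>J. ?z - X i) * (\<Prod>i\<in>J. aa X t i k) = (\<Prod>i\<in>J. ?z * t - X i)"
    unfolding prod.distrib[symmetric]
  proof (rule prod.cong[OF refl])
    fix i assume "i \<in> J"
    then have "X k - X i \<noteq> 0" using J Xk_ne by auto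
    then have "X i - X k \<noteq> 0" by (metis eq_iff_diff_eq_0)
    then show "(?z - X i) * aa X t i k = ?z * t - X i"
      unfolding aa_def by (simp add: field_simps)
  qed
  have a2: "(\<Prod>j\<in>S - J. ?z - X j) * (\<Prod>j\<in>S - J. aa X t k j) = (\<Prod>j\<in>S - J. ?z - t * X j)"
    unfolding aa_def
    by (rule prod_mult_div) (use Xk_ne in auto)
  have a3: "(\<Prod>l\<in>T. ?z - t * Y l) * ff T Y t ?z = (\<Prod>l\<in>T. ?z - Y l)"
    unfolding ff_def
    by (rule prod_mult_div) (use XtY_ne in auto)
  have e1: "poly DD ?z * (\<Prod>i\<in>J. aa X t i k) = poly (P1 J) ?z"
    unfolding poly_DD poly_P1 split using a1 by (simp add: algebra_simps)
  have e2: "poly DD ?z * (t ^ card J * (\<Prod>j\<in>S - J. aa X t k j) * ff T Y t (X k))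
      = t ^ card J * poly (P2 J) ?z"
  proof -
    have "poly DD ?z * (t ^ card J * (\<Prod>j\<in>S - J. aa X t k j) * ff T Y t (X k))
      = t ^ card J * ((\<Prod>j\<in>S - J. ?z - X j) * (\<Prod>j\<in>S - J. aa X t k j))
          * (\<Prod>i\<in>J. ?z - X i) * ((\<Prod>l\<in>T. ?z - t * Y l) * ff T Y t ?z)"
      unfolding poly_DD split by (simp add: algebra_simps)
    also have "\<dots> = t ^ card J * poly (P2 J) ?z"
      unfolding a2 a3 poly_P2 by (simp add: algebra_simps)
    finally show ?thesis .
  qed
  show ?thesis unfolding QQ_def poly_diff poly_smult right_diff_distrib e1 e2 ..
qed


lemma poly_PPhi: "poly PPhi z = (\<Sum>J\<in>Pow S. sg S X T Y t J * poly (QQ J) z)"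
  by (simp add: PPhi_def poly_sum)

lemma poly_PPhi_Xk: "poly PPhi (X k) = poly DD (X k) * Om (insert k S) X T Y t"
  unfolding poly_PPhi Om_split[OF fS kS] sum_distrib_left
  by (intro sum.cong refl) (simp add: poly_QQ_Xk algebra_simps)

lemma poly_PR: "poly PR z = (\<Sum>l\<in>T. RR l * ((\<Prod>i\<in>S. z - X i) * (\<Prod>j\<in>T - {l}. z - t * Y j)))"
  by (simp add: PR_def poly_sum poly_prod)

lemma poly_PR_Xk: "poly PR (X k) = poly DD (X k) * (\<Sum>l\<in>T. RR l / (X k - t * Y l))"
  unfolding poly_PR sum_distrib_left
proof (intro sum.cong refl)
  fix l assume l: "l \<in> T"
  have ne: "X k - t * Y l \<noteq> 0" using XtY_ne l by auto
  have eq: "poly DD (X k) = (\<Prod>i\<in>S. X k - X i) * ((X k - t * Y l) * (\<Prod>j\<in>T - {l}. X k - t * Y j))"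
    unfolding poly_DD using prod.remove[OF fT l, of "\<lambda>j. X k - t * Y j"] by simp
  then show "RR l * ((\<Prod>i\<in>S. X k - X i) * (\<Prod>j\<in>T - {l}. X k - t * Y j)) =
         poly DD (X k) * (RR l / (X k - t * Y l))"
    unfolding eq using ne by (simp add: field_simps)
qed

lemma dpos: "0 < card S + card T"
  using fT Tne by (simp add: card_gt_0_iff)

lemma cardJ: "J \<subseteq> S \<Longrightarrow> card J + card (S - J) = card S"
  using fS by (metis card_Diff_subset card_mono finite_subset le_add_diff_inverse)

lemma degree_QQ: assumes J: "J \<subseteq> S" shows "degree (QQ J) < card S + card T"
proof -
  have fJ: "finite J" using J fS finite_subset by auto
  have d1: "degree (P1 J) = card S + card T"
    unfolding P1_def using lin3_prod(1)[of J "S - J" T "\<lambda>i. t" "\<lambda>_. 1" "\<lambda>_. 1"] fJ fS fT t0 cardJ[OF J]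
    by simp
  have l1: "lead_coeff (P1 J) = t ^ card J"
    unfolding P1_def using lin3_prod(2)[of J "S - J" T "\<lambda>i. t" "\<lambda>_. 1" "\<lambda>_. 1"] fJ fS fT t0
    by simp
  have d2: "degree (P2 J) = card S + card T"
    unfolding P2_def using lin3_prod(1)[of "S - J" J T "\<lambda>_. 1" "\<lambda>_. 1" "\<lambda>_. 1"] fJ fS fT cardJ[OF J]
    by (simp add: add.commute[of "card (S - J)"])
  have l2: "lead_coeff (P2 J) = 1"
    unfolding P2_def using lin3_prod(2)[of "S - J" J T "\<lambda>_. 1" "\<lambda>_. 1" "\<lambda>_. 1"] fJ fS fT
    by simp
  show ?thesis unfolding QQ_def
    by (rule degree_diff_less[OF d1 _ _ dpos]) (use d2 l1 l2 t0 in simp_all)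
qed

lemma degree_PPhi: "degree PPhi < card S + card T"
proof -
  have "degree PPhi \<le> card S + card T - 1"
    unfolding PPhi_def
  proof (rule degree_sum_le)
    show "finite (Pow S)" using fS by simp
    fix J assume "J \<in> Pow S"
    then have "degree (QQ J) < card S + card T" using degree_QQ by auto
    then show "degree (smult (sg S X T Y t J) (QQ J)) \<le> card S + card T - 1"
      using degree_smult_le[of "sg S X T Y t J" "QQ J"] by linarith
  qed
  then show ?thesis using dpos by linarith
qed

lemma degree_PR: "degree PR < card S + card T"
proof -
  have "degree PR \<le> card S + card T - 1"
    unfolding PR_def
  proof (rule degree_sum_le)
    show "finite T" using fT .
    fix l assume l: "l \<in> T"
    have cT: "card (T - {l}) = card T - 1" using l fT by simp
    let ?p = "(\<Prod>i\<in>S. [:- X i, 1:]) * (\<Prod>j\<in>T - {l}. [:- (t * Y j), 1:])"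
    have a: "degree ?p \<le>
       degree (\<Prod>i\<in>S. [:- X i, 1:]) + degree (\<Prod>j\<in>T - {l}. [:- (t * Y j), 1:])"
      by (rule degree_mult_le)
    have b: "degree (\<Prod>i\<in>S. [:- X i, 1:]) = card S"
      by (rule lin_prod_degree) (use fS in auto)
    have c: "degree (\<Prod>j\<in>T - {l}. [:- (t * Y j), 1:]) = card (T - {l})"
      by (rule lin_prod_degree) (use fT in auto)
    have d: "degree (smult (RR l) ?p) \<le> degree ?p" by (rule degree_smult_le)
    have "card T \<ge> 1" using l fT by (metis One_nat_def Suc_leI card_gt_0_iff empty_iff)
    then show "degree (smult (RR l) ?p) \<le> card S + card T - 1"
      using a b c d cT by linarith
  qed
  then show ?thesis using dpos by linarith
qed


lemma Xi_ne: "i \<in> insert k S \<Longrightarrow> j \<in> insert k S \<Longrightarrow> i \<noteq> j \<Longrightarrow> X i - X j \<noteq> 0"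
  using injX by (auto simp: inj_on_def)

lemma poly_QQ_notin:
  assumes "i \<in> S" "J \<subseteq> S" "i \<notin> J"
  shows "poly (QQ J) (X i) = - (t ^ card J * poly (P2 J) (X i))"
proof -
  have "(\<Prod>j\<in>S - J. X i - X j) = 0"
    using assms fS by (auto simp: prod_zero_iff intro!: bexI[of _ i])
  then have "poly (P1 J) (X i) = 0" unfolding poly_P1 by simp
  then show ?thesis unfolding QQ_def by simp
qed

lemma poly_QQ_in:
  assumes "i \<in> J" "J \<subseteq> S"
  shows "poly (QQ J) (X i) = poly (P1 J) (X i)"
proof -
  have fJ: "finite J" using assms fS finite_subset by auto
  have "(\<Prod>r\<in>J. X i - X r) = 0"
    using assms fJ by (auto simp: prod_zero_iff intro!: bexI[of _ i])
  then have "poly (P2 J) (X i) = 0" unfolding poly_P2 by simp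
  then show ?thesis unfolding QQ_def by simp
qed

lemma pair_cancel:
  assumes i: "i \<in> S" and K: "K \<subseteq> S - {i}"
  shows "sg S X T Y t (insert i K) * poly (P1 (insert i K)) (X i)
       = sg S X T Y t K * (t ^ card K * poly (P2 K) (X i))"
proof -
  let ?S0 = "S - {i}"
  have fK: "finite K" using K fS finite_subset by auto
  have iK: "i \<notin> K" using K by auto
  have fS0: "finite ?S0" using fS by simp
  have e1: "S - insert i K = ?S0 - K" by auto
  have e2: "S - K = insert i (?S0 - K)" using i iK by auto
  have iS0K: "i \<notin> ?S0 - K" by simp
  define Cm where "Cm = (\<Prod>r\<in>K. \<Prod>j\<in>?S0 - K. aa X t r j)"
  define FK where "FK = (\<Prod>r\<in>K. ff T Y t (X r))"
  define Ai where "Ai = (\<Prod>j\<in>?S0 - K. aa X t i j)"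
  define Bi where "Bi = (\<Prod>r\<in>K. aa X t r i)"
  define fi where "fi = ff T Y t (X i)"
  define PKt where "PKt = (\<Prod>r\<in>K. X i * t - X r)"
  define PKd where "PKd = (\<Prod>r\<in>K. X i - X r)"
  define PS0d where "PS0d = (\<Prod>j\<in>?S0 - K. X i - X j)"
  define PS0t where "PS0t = (\<Prod>j\<in>?S0 - K. X i - t * X j)"
  define PTt where "PTt = (\<Prod>l\<in>T. X i - t * Y l)"
  define PTy where "PTy = (\<Prod>l\<in>T. X i - Y l)"
  have sg1: "sg S X T Y t (insert i K) = - ((-1) ^ card K * t ^ (card K choose 2) * t ^ card K * (Ai * Cm) * (fi * FK))"
    unfolding sg_def e1 Cm_def FK_def Ai_def fi_def using fK iK
    by (simp add: choose2_Suc power_add)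
  have "(\<Prod>r\<in>K. \<Prod>j\<in>S - K. aa X t r j) = (\<Prod>r\<in>K. aa X t r i * (\<Prod>j\<in>?S0 - K. aa X t r j))"
    unfolding e2 using fS0 by (intro prod.cong refl) (simp add: prod.insert)
  also have "\<dots> = Bi * Cm" unfolding Bi_def Cm_def by (rule prod.distrib)
  finally have sg2: "sg S X T Y t K = (-1) ^ card K * t ^ (card K choose 2) * (Bi * Cm) * FK"
    unfolding sg_def FK_def by simp
  have p1: "poly (P1 (insert i K)) (X i) = (X i * t - X i) * PKt * PS0d * PTt"
    unfolding poly_P1 e1 PKt_def PS0d_def PTt_def using fK iK by simp
  have p2: "poly (P2 K) (X i) = (X i - t * X i) * PS0t * PKd * PTy"
    unfolding poly_P2 e2 PKd_def PS0t_def PTy_def using fS0 by simp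
  have k1: "PS0d * Ai = PS0t"
    unfolding PS0d_def Ai_def PS0t_def aa_def
    by (rule prod_mult_div) (use Xi_ne i in auto)
  have k2: "PTt * fi = PTy"
    unfolding PTt_def fi_def PTy_def ff_def
    by (rule prod_mult_div) (use XtY_ne i in auto)
  have k3: "Bi * PKd = PKt"
    unfolding Bi_def PKd_def PKt_def prod.distrib[symmetric]
  proof (rule prod.cong[OF refl])
    fix r assume r: "r \<in> K"
    then have "X r - X i \<noteq> 0" using Xi_ne i K iK by auto
    then show "aa X t r i * (X i - X r) = X i * t - X r"
      unfolding aa_def by (simp add: field_simps)
  qed
  show ?thesis
    unfolding sg1 sg2 p1 p2 k1[symmetric] k2[symmetric] k3[symmetric]
    by (simp add: algebra_simps)
qed

lemma poly_PPhi_Xi: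
  assumes i: "i \<in> S"
  shows "poly PPhi (X i) = 0"
proof -
  let ?S0 = "S - {i}"
  have S: "S = insert i ?S0" using i by auto
  have "poly PPhi (X i) = (\<Sum>J\<in>Pow (insert i ?S0). sg S X T Y t J * poly (QQ J) (X i))"
    unfolding poly_PPhi using S by simp
  also have "\<dots> = (\<Sum>K\<in>Pow ?S0. sg S X T Y t K * poly (QQ K) (X i)
         + sg S X T Y t (insert i K) * poly (QQ (insert i K)) (X i))"
    by (rule sum_Pow_insert) (use fS in auto)
  also have "\<dots> = (\<Sum>K\<in>Pow ?S0. 0)"
  proof (intro sum.cong refl)
    fix K assume K: "K \<in> Pow ?S0"
    then have KS: "K \<subseteq> S" and iK: "i \<notin> K" by auto
    have "poly (QQ K) (X i) = - (t ^ card K * poly (P2 K) (X i))"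
      by (rule poly_QQ_notin[OF i KS iK])
    moreover have "poly (QQ (insert i K)) (X i) = poly (P1 (insert i K)) (X i)"
      by (rule poly_QQ_in) (use KS i in auto)
    ultimately show "sg S X T Y t K * poly (QQ K) (X i)
         + sg S X T Y t (insert i K) * poly (QQ (insert i K)) (X i) = 0"
      using pair_cancel[OF i] K by simp
  qed
  finally show ?thesis by simp
qed

lemma poly_PR_Xi:
  assumes i: "i \<in> S"
  shows "poly PR (X i) = 0"
proof -
  have "(\<Prod>i'\<in>S. X i - X i') = 0"
    using i fS by (auto simp: prod_zero_iff intro!: bexI[of _ i])
  then show ?thesis unfolding poly_PR by simp
qed


lemma Yne: "l \<in> T \<Longrightarrow> j \<in> T \<Longrightarrow> j \<noteq> l \<Longrightarrow> Y j - Y l \<noteq> 0"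
  using injY by (auto simp: inj_on_def)

lemma sg_remove:
  assumes l: "l \<in> T"
  shows "sg S X T Y t J = sg S X (T - {l}) Y t J * (\<Prod>r\<in>J. (X r - Y l) / (X r - t * Y l))"
proof -
  have "(\<Prod>r\<in>J. ff T Y t (X r)) = (\<Prod>r\<in>J. ff (T - {l}) Y t (X r) * ((X r - Y l) / (X r - t * Y l)))"
    unfolding ff_def by (intro prod.cong refl, subst prod.remove[OF fT l]) (simp_all add: mult.commute)
  also have "\<dots> = (\<Prod>r\<in>J. ff (T - {l}) Y t (X r)) * (\<Prod>r\<in>J. (X r - Y l) / (X r - t * Y l))"
    by (rule prod.distrib)
  finally show ?thesis unfolding sg_def by (simp add: algebra_simps)
qed

lemma poly_QQ_tY:
  assumes l: "l \<in> T"
  shows "poly (QQ J) (t * Y l) = - (t ^ card J * poly (P2 J) (t * Y l))"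
proof -
  have "(\<Prod>l'\<in>T. t * Y l - t * Y l') = 0"
    using l fT by (auto simp: prod_zero_iff intro!: bexI[of _ l])
  then have "poly (P1 J) (t * Y l) = 0" unfolding poly_P1 by simp
  then show ?thesis unfolding QQ_def by simp
qed

lemma poly_PR_tY:
  assumes l: "l \<in> T"
  shows "poly PR (t * Y l) = RR l * ((\<Prod>i\<in>S. t * Y l - X i) * (\<Prod>j\<in>T - {l}. t * Y l - t * Y j))"
proof -
  have z: "RR l' * ((\<Prod>i\<in>S. t * Y l - X i) * (\<Prod>j\<in>T - {l'}. t * Y l - t * Y j)) = 0"
    if "l' \<in> T - {l}" for l'
  proof -
    have "(\<Prod>j\<in>T - {l'}. t * Y l - t * Y j) = 0"
      using that l fT by (auto simp: prod_zero_iff intro!: bexI[of _ l])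
    then show ?thesis by simp
  qed
  have zz: "(\<Sum>l'\<in>T - {l}. RR l' * ((\<Prod>i\<in>S. t * Y l - X i) * (\<Prod>j\<in>T - {l'}. t * Y l - t * Y j))) = 0"
    by (intro sum.neutral ballI z)
  show ?thesis unfolding poly_PR sum.remove[OF fT l] zz by simp
qed

lemma per_J:
  assumes l: "l \<in> T" and J: "J \<subseteq> S"
  shows "(\<Prod>r\<in>J. (X r - Y l) / (X r - t * Y l)) * (- (t ^ card J * poly (P2 J) (t * Y l)))
    = t powi (int (card S + 1) - int (card T)) * (1 - t) * Y l
     * ((\<Prod>i\<in>S. (X i - Y l) / (X i - t * Y l)) * (\<Prod>i\<in>S. t * Y l - X i))
     * ((\<Prod>i\<in>T - {l}. (Y i - t * Y l) / (Y i - Y l)) * (\<Prod>j\<in>T - {l}. t * Y l - t * Y j))"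
proof -
  have fJ: "finite J" using J fS finite_subset by auto
  have JS: "\<forall>r\<in>J. X r - t * Y l \<noteq> 0" using J XtY_ne l by auto
  have f1: "(\<Prod>r\<in>J. (X r - Y l) / (X r - t * Y l)) * (\<Prod>r\<in>J. t * Y l - X r) = (\<Prod>r\<in>J. Y l - X r)"
    unfolding prod.distrib[symmetric]
  proof (rule prod.cong[OF refl])
    fix r assume "r \<in> J" then have "X r - t * Y l \<noteq> 0" using JS by auto
    then show "(X r - Y l) / (X r - t * Y l) * (t * Y l - X r) = Y l - X r"
      by (simp add: field_simps)
  qed
  have f2: "(\<Prod>j\<in>S - J. t * Y l - t * X j) = t ^ card (S - J) * (\<Prod>j\<in>S - J. Y l - X j)"
  proof -
    have "(\<Prod>j\<in>S - J. t * Y l - t * X j) = (\<Prod>j\<in>S - J. t * (Y l - X j))"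
      by (simp add: algebra_simps)
    also have "\<dots> = t ^ card (S - J) * (\<Prod>j\<in>S - J. Y l - X j)"
      by (simp add: prod.distrib)
    finally show ?thesis .
  qed
  have f3: "(\<Prod>j\<in>S - J. Y l - X j) * (\<Prod>r\<in>J. Y l - X r) = (\<Prod>i\<in>S. Y l - X i)"
    by (rule prod.subset_diff[OF J fS, symmetric])
  have f4: "(\<Prod>j\<in>T. t * Y l - Y j) = (t * Y l - Y l) * (\<Prod>j\<in>T - {l}. t * Y l - Y j)"
    by (rule prod.remove[OF fT l])
  have f5: "(\<Prod>i\<in>S. (X i - Y l) / (X i - t * Y l)) * (\<Prod>i\<in>S. t * Y l - X i) = (\<Prod>i\<in>S. Y l - X i)"
    unfolding prod.distrib[symmetric]
  proof (rule prod.cong[OF refl])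
    fix r assume "r \<in> S" then have "X r - t * Y l \<noteq> 0" using XtY_ne l by auto
    then show "(X r - Y l) / (X r - t * Y l) * (t * Y l - X r) = Y l - X r"
      by (simp add: field_simps)
  qed
  have f6: "(\<Prod>i\<in>T - {l}. (Y i - t * Y l) / (Y i - Y l)) * (\<Prod>j\<in>T - {l}. t * Y l - t * Y j)
      = t ^ card (T - {l}) * (\<Prod>j\<in>T - {l}. t * Y l - Y j)"
  proof -
    have "(\<Prod>i\<in>T - {l}. (Y i - t * Y l) / (Y i - Y l)) * (\<Prod>j\<in>T - {l}. t * Y l - t * Y j)
       = (\<Prod>j\<in>T - {l}. t * (t * Y l - Y j))"
      unfolding prod.distrib[symmetric]
    proof (rule prod.cong[OF refl])
      fix j assume "j \<in> T - {l}" then have "Y j - Y l \<noteq> 0" using Yne l by auto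
      then show "(Y j - t * Y l) / (Y j - Y l) * (t * Y l - t * Y j) = t * (t * Y l - Y j)"
        by (simp add: field_simps)
    qed
    also have "\<dots> = t ^ card (T - {l}) * (\<Prod>j\<in>T - {l}. t * Y l - Y j)"
      by (simp add: prod.distrib)
    finally show ?thesis .
  qed
  have cT: "card T \<ge> 1" using l fT by (metis One_nat_def Suc_leI card_gt_0_iff empty_iff)
  have f7: "t powi (int (card S + 1) - int (card T)) * t ^ card (T - {l}) = t ^ card S"
  proof -
    have "t ^ card (T - {l}) = t powi (int (card T) - 1)"
      using l fT cT by (metis card_Diff_singleton of_nat_diff of_nat_1 power_int_of_nat)
    have e: "int (card S + 1) - int (card T) + (int (card T) - 1) = int (card S)" by simp
    have "t powi (int (card S + 1) - int (card T)) * t powi (int (card T) - 1)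
       = t powi (int (card S + 1) - int (card T) + (int (card T) - 1))"
      by (rule power_int_add[symmetric]) (use t0 in simp)
    also have "\<dots> = t ^ card S" unfolding e by simp
    finally show ?thesis using \<open>t ^ card (T - {l}) = t powi (int (card T) - 1)\<close> by simp
  qed
  have f8: "t ^ card J * t ^ card (S - J) = t ^ card S"
    using cardJ[OF J] by (simp add: power_add[symmetric])
  have P2: "poly (P2 J) (t * Y l) = (\<Prod>j\<in>S - J. t * Y l - t * X j) * (\<Prod>r\<in>J. t * Y l - X r) * (\<Prod>j\<in>T. t * Y l - Y j)"
    by (rule poly_P2)
  have L: "(\<Prod>r\<in>J. (X r - Y l) / (X r - t * Y l)) * (- (t ^ card J * poly (P2 J) (t * Y l)))
     = - ((t ^ card J * t ^ card (S - J)) * ((\<Prod>j\<in>S - J. Y l - X j) * (\<Prod>r\<in>J. Y l - X r)) * (t * Y l - Y l) * (\<Prod>j\<in>T - {l}. t * Y l - Y j))"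
    unfolding P2 f2 f4 f1[symmetric] by (simp add: algebra_simps)
  have R: "t powi (int (card S + 1) - int (card T)) * (1 - t) * Y l
     * ((\<Prod>i\<in>S. (X i - Y l) / (X i - t * Y l)) * (\<Prod>i\<in>S. t * Y l - X i))
     * ((\<Prod>i\<in>T - {l}. (Y i - t * Y l) / (Y i - Y l)) * (\<Prod>j\<in>T - {l}. t * Y l - t * Y j))
     = (t powi (int (card S + 1) - int (card T)) * t ^ card (T - {l})) * (1 - t) * Y l * (\<Prod>i\<in>S. Y l - X i) * (\<Prod>j\<in>T - {l}. t * Y l - Y j)"
    unfolding f5 f6 by (simp add: algebra_simps)
  show ?thesis unfolding L R f3 f7 f8 by (simp add: algebra_simps)
qed

lemma poly_tY:
  assumes l: "l \<in> T"
  shows "poly PPhi (t * Y l) = poly PR (t * Y l)"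
proof -
  have "poly PPhi (t * Y l) = (\<Sum>J\<in>Pow S. sg S X (T - {l}) Y t J *
      ((\<Prod>r\<in>J. (X r - Y l) / (X r - t * Y l)) * (- (t ^ card J * poly (P2 J) (t * Y l)))))"
    unfolding poly_PPhi poly_QQ_tY[OF l] sg_remove[OF l] by (simp add: algebra_simps)
  also have "\<dots> = (\<Sum>J\<in>Pow S. sg S X (T - {l}) Y t J *
      (t powi (int (card S + 1) - int (card T)) * (1 - t) * Y l
     * ((\<Prod>i\<in>S. (X i - Y l) / (X i - t * Y l)) * (\<Prod>i\<in>S. t * Y l - X i))
     * ((\<Prod>i\<in>T - {l}. (Y i - t * Y l) / (Y i - Y l)) * (\<Prod>j\<in>T - {l}. t * Y l - t * Y j))))"
    using per_J[OF l] by (intro sum.cong refl) auto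
  also have "\<dots> = (\<Sum>J\<in>Pow S. sg S X (T - {l}) Y t J) *
      (t powi (int (card S + 1) - int (card T)) * (1 - t) * Y l
     * ((\<Prod>i\<in>S. (X i - Y l) / (X i - t * Y l)) * (\<Prod>i\<in>S. t * Y l - X i))
     * ((\<Prod>i\<in>T - {l}. (Y i - t * Y l) / (Y i - Y l)) * (\<Prod>j\<in>T - {l}. t * Y l - t * Y j)))"
    by (rule sum_distrib_right[symmetric])
  also have "\<dots> = poly PR (t * Y l)"
    unfolding poly_PR_tY[OF l] RR_def Om_sg by (simp add: algebra_simps)
  finally show ?thesis .
qed


lemma main_ctx: "Om (insert k S) X T Y t = (\<Sum>l\<in>T. RR l / (X k - t * Y l))"
proof -
  define R where "R = X ` S \<union> (\<lambda>l. t * Y l) ` T"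
  have fR: "finite R" unfolding R_def using fS fT by simp
  have injS: "inj_on X S" using injX by (rule inj_on_subset) auto
  have injT: "inj_on (\<lambda>l. t * Y l) T" using injY t0 by (auto simp: inj_on_def)
  have disj: "X ` S \<inter> (\<lambda>l. t * Y l) ` T = {}" using xy by auto
  have cR: "card R = card S + card T"
    unfolding R_def using fS fT disj card_image[OF injS] card_image[OF injT]
    by (simp add: card_Un_disjoint)
  have roots: "\<forall>r\<in>R. poly (PPhi - PR) r = 0"
    unfolding R_def using poly_PPhi_Xi poly_PR_Xi poly_tY by auto
  have deg: "degree (PPhi - PR) < card R"
    unfolding cR using degree_diff_le_max[of PPhi PR] degree_PPhi degree_PR by linarith
  have "PPhi - PR = 0" by (rule poly_zero_many_roots[OF deg fR roots])
  then have "poly PPhi (X k) = poly PR (X k)" by simp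
  then have eq: "poly DD (X k) * Om (insert k S) X T Y t = poly DD (X k) * (\<Sum>l\<in>T. RR l / (X k - t * Y l))"
    unfolding poly_PPhi_Xk poly_PR_Xk .
  have "poly DD (X k) \<noteq> 0"
    unfolding poly_DD using fS fT Xk_ne XtY_ne by (auto simp: prod_zero_iff)
  with eq show ?thesis by simp
qed


lemma main_expanded:
  "Om (insert k S) X T Y t = t powi (int (card S + 1) - int (card T)) * (1 - t) *
    (\<Sum>l\<in>T. Om S X (T - {l}) Y t * (Y l / (X k - t * Y l))
       * (\<Prod>i\<in>S. (X i - Y l) / (X i - t * Y l))
       * (\<Prod>i\<in>T - {l}. (Y i - t * Y l) / (Y i - Y l)))"
  unfolding main_ctx RR_def sum_distrib_left by (intro sum.cong refl) (simp add: algebra_simps)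

end

definition sh :: "nat \<Rightarrow> nat \<Rightarrow> nat" where "sh k i = (if i < k then i else Suc i)"

lemma inj_sh: "inj_on (sh k) A"
  unfolding sh_def inj_on_def by auto

lemma sh_image: assumes "k < m" shows "sh k ` {0..<m - 1} = {0..<m} - {k}"
proof
  show "sh k ` {0..<m - 1} \<subseteq> {0..<m} - {k}" using assms unfolding sh_def by auto
  show "{0..<m} - {k} \<subseteq> sh k ` {0..<m - 1}"
  proof
    fix j assume j: "j \<in> {0..<m} - {k}"
    show "j \<in> sh k ` {0..<m - 1}"
    proof (cases "j < k")
      case True then show ?thesis using j assms by (intro rev_image_eqI[of j]) (auto simp: sh_def)
    next
      case False then show ?thesis using j assms by (intro rev_image_eqI[of "j - 1"]) (auto simp: sh_def)
    qed
  qed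
qed

lemma length_del_nth: "k < length xs \<Longrightarrow> length (del_nth k xs) = length xs - 1"
  unfolding del_nth_def by simp

lemma nth_del_nth: "k < length xs \<Longrightarrow> i < length xs - 1 \<Longrightarrow> del_nth k xs ! i = xs ! sh k i"
  unfolding del_nth_def sh_def by (auto simp: nth_append min_def)

lemma omega_del:
  assumes "k < length xs" "l < length ys"
  shows "omega (del_nth k xs) (del_nth l ys) t
       = Om ({0..<length xs} - {k}) (nth xs) ({0..<length ys} - {l}) (nth ys) t"
proof -
  have "omega (del_nth k xs) (del_nth l ys) t
      = Om {0..<length xs - 1} (nth (del_nth k xs)) {0..<length ys - 1} (nth (del_nth l ys)) t"
    unfolding omega_Om using assms by (simp add: length_del_nth)
  also have "\<dots> = Om {0..<length xs - 1} (nth xs \<circ> sh k) {0..<length ys - 1} (nth ys \<circ> sh l) t"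
    by (rule Om_cong) (use assms in \<open>auto simp: nth_del_nth\<close>)
  also have "\<dots> = Om (sh k ` {0..<length xs - 1}) (nth xs) (sh l ` {0..<length ys - 1}) (nth ys) t"
    by (rule Om_reindex[symmetric]) (rule inj_sh)+
  also have "\<dots> = Om ({0..<length xs} - {k}) (nth xs) ({0..<length ys} - {l}) (nth ys) t"
    by (simp only: sh_image[OF assms(1)] sh_image[OF assms(2)])
  finally show ?thesis .
qed

theorem proposition3p4:
  fixes x y :: "'a::field list" and t :: 'a and k :: nat
  assumes "1 \<le> length x" and "length x \<le> length y"
    and "k < length x"
    and "distinct x" and "distinct y"
    and "t \<noteq> 0"
    and "\<forall>i<length x. \<forall>j<length y. x!i \<noteq> t * y!j"
  shows "omega x y t =
    t powi (int (length x) - int (length y)) * (1 - t) *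
    (\<Sum>l<length y. omega (del_nth k x) (del_nth l y) t * (y!l / (x!k - t * y!l))
       * (\<Prod>i\<in>{0..<length x} - {k}. (x!i - y!l) / (x!i - t * y!l))
       * (\<Prod>i\<in>{0..<length y} - {l}. (y!i - t * y!l) / (y!i - y!l)))"
proof -
  let ?S = "{0..<length x} - {k}"
  let ?T = "{0..<length y}"
  have ins: "insert k ?S = {0..<length x}" using assms(3) by auto
  have cS: "card ?S + 1 = length x" using assms(3) by simp
  have Tne: "?T \<noteq> {}" using assms(1,2) by auto
  have injX: "inj_on (nth x) (insert k ?S)" unfolding ins using assms(4) by (simp add: inj_on_nth)
  have injY: "inj_on (nth y) ?T" using assms(5) by (simp add: inj_on_nth)
  have xy: "\<forall>i\<in>insert k ?S. \<forall>j\<in>?T. x ! i \<noteq> t * y ! j" unfolding ins using assms(7) by auto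
  have M: "Om (insert k ?S) (nth x) ?T (nth y) t = t powi (int (card ?S + 1) - int (card ?T)) * (1 - t) *
    (\<Sum>l\<in>?T. Om ?S (nth x) (?T - {l}) (nth y) t * (y ! l / (x ! k - t * y ! l))
       * (\<Prod>i\<in>?S. (x ! i - y ! l) / (x ! i - t * y ! l))
       * (\<Prod>i\<in>?T - {l}. (y ! i - t * y ! l) / (y ! i - y ! l)))"
    by (rule main_expanded) (use Tne injX injY assms(6) xy in auto)
  have D: "\<And>l. l \<in> ?T \<Longrightarrow> omega (del_nth k x) (del_nth l y) t = Om ?S (nth x) (?T - {l}) (nth y) t"
    using omega_del assms(3) by auto
  have "omega x y t = Om (insert k ?S) (nth x) ?T (nth y) t"
    unfolding omega_Om[of x y] ins ..
  also have "\<dots> = t powi (int (card ?S + 1) - int (card ?T)) * (1 - t) *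
    (\<Sum>l\<in>?T. Om ?S (nth x) (?T - {l}) (nth y) t * (y ! l / (x ! k - t * y ! l))
       * (\<Prod>i\<in>?S. (x ! i - y ! l) / (x ! i - t * y ! l))
       * (\<Prod>i\<in>?T - {l}. (y ! i - t * y ! l) / (y ! i - y ! l)))" by (rule M)
  also have "\<dots> = t powi (int (length x) - int (length y)) * (1 - t) *
    (\<Sum>l<length y. omega (del_nth k x) (del_nth l y) t * (y!l / (x!k - t * y!l))
       * (\<Prod>i\<in>{0..<length x} - {k}. (x!i - y!l) / (x!i - t * y!l))
       * (\<Prod>i\<in>{0..<length y} - {l}. (y!i - t * y!l) / (y!i - y!l)))"
    unfolding cS card_atLeastLessThan lessThan_atLeast0
    using D by (intro arg_cong2[where f="(*)"] refl sum.cong) simp_all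
  finally show ?thesis .
qed

end
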